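(* Let $G$ be a graph. (i) If some connected component of $G$ has a degree sequence of cardinality $r>2$, then $K(H(G,x))\ge 2$. (ii) For each integer $r\ge 1$ there exists a graph $G$ whose degree sequence has cardinality $r$ and with $K(H(G,x))=1$.
   Context: All graphs are finite, simple and have no isolated vertices; $d_u$ is the degree of $u$. The harmonic polynomial is $H(G,x)=\sum_{uv\in E(G)}x^{d_u+d_v-1}$. For a polynomial $p$, $K(p(x))$ is the number of its non-zero coefficients. The degree sequence of a graph is the set of distinct vertex degree values, and its cardinality is the number of distinct vertex degrees. *)

theory Defs
  imports "HOL-Computational_Algebra.Polynomial"
begin

text \<open>A finite simple graph without isolated vertices is given by its edge set;
  its vertex set is the union of the edges.\<close>

definition graph :: "'a set set \<Rightarrow> bool" where
  "graph E \<longleftrightarrow> finite E \<and> (\<forall>e\<in>E. \<exists>u v. u \<noteq> v \<and> e = {u, v})"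

definition verts :: "'a set set \<Rightarrow> 'a set" where
  "verts E = \<Union> E"

definition deg :: "'a set set \<Rightarrow> 'a \<Rightarrow> nat" where
  "deg E u = card {e \<in> E. u \<in> e}"

definition harmonic_poly :: "'a set set \<Rightarrow> nat poly" where
  "harmonic_poly E = (\<Sum>e\<in>E. monom 1 ((\<Sum>w\<in>e. deg E w) - 1))"

definition num_nonzero_coeffs :: "'b::zero poly \<Rightarrow> nat" where
  "num_nonzero_coeffs p = card {i. coeff p i \<noteq> 0}"

definition adj_rel :: "'a set set \<Rightarrow> ('a \<times> 'a) set" where
  "adj_rel E = {(u, v). {u, v} \<in> E}"

definition component :: "'a set set \<Rightarrow> 'a \<Rightarrow> 'a set" where
  "component E v = {w. (v, w) \<in> (adj_rel E)\<^sup>*}"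

definition degree_set :: "'a set set \<Rightarrow> 'a set \<Rightarrow> nat set" where
  "degree_set E S = deg E ` S"

end

theory Submission
  imports Defs "HOL-Library.Nat_Bijection"
begin

definition hexp :: "'a set set \<Rightarrow> 'a set \<Rightarrow> nat" where
  "hexp E e = (\<Sum>w\<in>e. deg E w) - 1"

lemma coeff_harm:
  assumes "finite E"
  shows "coeff (harmonic_poly E) i = card {e\<in>E. hexp E e = i}"
proof -
  show ?thesis
    unfolding harmonic_poly_def hexp_def using assms by (simp add: coeff_sum coeff_monom sum.If_cases Int_def conj_commute)
qed

lemma K_eq:
  assumes "finite E"
  shows "num_nonzero_coeffs (harmonic_poly E) = card (hexp E ` E)"
proof -
  have "{i. coeff (harmonic_poly E) i \<noteq> 0} = hexp E ` E"
    using assms by (auto simp: coeff_harm)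
  thus ?thesis unfolding num_nonzero_coeffs_def by simp
qed

lemma deg_pos:
  assumes "finite E" "e \<in> E" "u \<in> e"
  shows "deg E u \<ge> 1"
proof -
  have "e \<in> {e \<in> E. u \<in> e}" using assms by auto
  moreover have "finite {e \<in> E. u \<in> e}" using assms by auto
  ultimately have "card {e \<in> E. u \<in> e} > 0" using card_gt_0_iff by blast
  thus ?thesis unfolding deg_def by simp
qed

lemma part1:
  fixes E :: "'a set set"
  assumes g: "graph E" and v: "v \<in> verts E" and c: "card (degree_set E (component E v)) > 2"
  shows "num_nonzero_coeffs (harmonic_poly E) \<ge> 2"
proof (rule ccontr)
  assume nt: "\<not> num_nonzero_coeffs (harmonic_poly E) \<ge> 2"
  have fin: "finite E" using g graph_def by auto
  have le1: "card (hexp E ` E) \<le> 1" using nt K_eq[OF fin] by simp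
  have eqexp: "\<And>e f. e \<in> E \<Longrightarrow> f \<in> E \<Longrightarrow> hexp E e = hexp E f"
    using le1 fin by (metis card_le_Suc0_iff_eq finite_imageI imageI One_nat_def)
  have sumdeg: "\<And>x y. {x,y} \<in> E \<Longrightarrow> x \<noteq> y \<Longrightarrow> hexp E {x,y} = deg E x + deg E y - 1"
    unfolding hexp_def by simp
  from v obtain e0 where e0: "e0 \<in> E" "v \<in> e0" unfolding verts_def by auto
  then obtain a b where ab: "a \<noteq> b" "e0 = {a,b}" using g unfolding graph_def by blast
  define s where "s = hexp E e0 + 1"
  have key: "\<And>x y. {x,y} \<in> E \<Longrightarrow> deg E x + deg E y = s"
  proof -
    fix x y assume xy: "{x,y} \<in> E"
    then obtain p q where pq: "p \<noteq> q" "{x,y} = {p,q}" using g unfolding graph_def by blast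
    hence "x \<noteq> y" by (metis doubleton_eq_iff)
    have "deg E x \<ge> 1" "deg E y \<ge> 1" using deg_pos[OF fin xy] by auto
    moreover have "hexp E {x,y} = deg E x + deg E y - 1" by (rule sumdeg[OF xy \<open>x \<noteq> y\<close>])
    moreover have "hexp E {x,y} = hexp E e0" by (rule eqexp[OF xy e0(1)])
    ultimately show "deg E x + deg E y = s" unfolding s_def by linarith
  qed
  have vle: "deg E v \<le> s"
  proof -
    have "v = a \<or> v = b" using ab e0 by auto
    then obtain w where "{v,w} \<in> E" using ab e0 by (auto simp: insert_commute)
    thus ?thesis using key by fastforce
  qed
  have inv: "\<And>w. (v, w) \<in> (adj_rel E)\<^sup>* \<Longrightarrow> deg E w \<in> {deg E v, s - deg E v}"
  proof -
    fix w assume "(v, w) \<in> (adj_rel E)\<^sup>*"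
    thus "deg E w \<in> {deg E v, s - deg E v}"
    proof (induction rule: rtrancl_induct)
      case base then show ?case by simp
    next
      case (step y z)
      then have "{y,z} \<in> E" unfolding adj_rel_def by simp
      then have "deg E y + deg E z = s" using key by simp
      then show ?case using step.IH vle by auto
    qed
  qed
  have "degree_set E (component E v) \<subseteq> {deg E v, s - deg E v}"
    unfolding degree_set_def component_def using inv by auto
  hence "card (degree_set E (component E v)) \<le> card {deg E v, s - deg E v}"
    by (intro card_mono) auto
  also have "\<dots> \<le> 2" by (simp add: card_insert_le_m1)
  finally show False using c by simp
qed

definition vx :: "nat \<Rightarrow> bool \<Rightarrow> nat \<Rightarrow> nat" where
  "vx a b i = prod_encode (a, prod_encode (if b then 1 else 0, i))"

lemma vx_eq[simp]: "vx a b i = vx a' b' i' \<longleftrightarrow> a = a' \<and> b = b' \<and> i = i'"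
  unfolding vx_def by (auto simp: prod_encode_eq split: if_splits)

definition idx :: "nat \<Rightarrow> (nat \<times> nat \<times> nat) set" where
  "idx r = {(a,i,j). 1 \<le> a \<and> a \<le> r \<and> i < a \<and> j < r + 1 - a}"

definition ed :: "nat \<times> nat \<times> nat \<Rightarrow> nat set" where
  "ed t = (case t of (a,i,j) \<Rightarrow> {vx a False i, vx a True j})"

definition EE :: "nat \<Rightarrow> nat set set" where
  "EE r = ed ` idx r"

lemma fin_idx: "finite (idx r)"
proof -
  have "idx r \<subseteq> {..r} \<times> {..r} \<times> {..r}" unfolding idx_def by auto
  thus ?thesis by (rule finite_subset) auto
qed

lemma graph_EE: "graph (EE r)"
  unfolding graph_def EE_def using fin_idx by (auto simp: ed_def) (metis vx_eq)

lemma in_ed[simp]: "x \<in> ed (a,i,j) \<longleftrightarrow> x = vx a False i \<or> x = vx a True j"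
  unfolding ed_def by auto

lemma ed_in: "1 \<le> a \<Longrightarrow> a \<le> r \<Longrightarrow> i < a \<Longrightarrow> j < r + 1 - a \<Longrightarrow> ed (a,i,j) \<in> EE r"
  unfolding EE_def idx_def by auto

lemma ed_eq[simp]: "ed (a,i,j) = ed (a',i',j') \<longleftrightarrow> a = a' \<and> i = i' \<and> j = j'"
  unfolding ed_def by (auto simp: doubleton_eq_iff)

lemma degL:
  assumes "1 \<le> a" "a \<le> r" "i < a"
  shows "deg (EE r) (vx a False i) = r + 1 - a"
proof -
  have "{e \<in> EE r. vx a False i \<in> e} = (\<lambda>j. ed (a,i,j)) ` {..<r+1-a}"
    using assms unfolding EE_def idx_def by (auto intro: ed_in[unfolded EE_def idx_def])
  moreover have "inj_on (\<lambda>j. ed (a,i,j)) {..<r+1-a}" by (auto simp: inj_on_def)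
  ultimately show ?thesis unfolding deg_def by (simp add: card_image)
qed

lemma degR:
  assumes "1 \<le> a" "a \<le> r" "j < r + 1 - a"
  shows "deg (EE r) (vx a True j) = a"
proof -
  have "{e \<in> EE r. vx a True j \<in> e} = (\<lambda>i. ed (a,i,j)) ` {..<a}"
    using assms unfolding EE_def idx_def by (auto intro: ed_in[unfolded EE_def idx_def])
  moreover have "inj_on (\<lambda>i. ed (a,i,j)) {..<a}" by (auto simp: inj_on_def)
  ultimately show ?thesis unfolding deg_def by (simp add: card_image)
qed

lemma verts_EE: "verts (EE r) =
   {vx a False i | a i. 1 \<le> a \<and> a \<le> r \<and> i < a} \<union> {vx a True j | a j. 1 \<le> a \<and> a \<le> r \<and> j < r + 1 - a}"
proof
  show "verts (EE r) \<subseteq> {vx a False i | a i. 1 \<le> a \<and> a \<le> r \<and> i < a} \<union> {vx a True j | a j. 1 \<le> a \<and> a \<le> r \<and> j < r + 1 - a}"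
  proof
    fix x assume "x \<in> verts (EE r)"
    then obtain a i j where t: "(a,i,j) \<in> idx r" "x \<in> ed (a,i,j)"
      unfolding verts_def EE_def by auto
    then show "x \<in> {vx a False i | a i. 1 \<le> a \<and> a \<le> r \<and> i < a} \<union> {vx a True j | a j. 1 \<le> a \<and> a \<le> r \<and> j < r + 1 - a}"
      unfolding idx_def by auto
  qed
next
  show "{vx a False i | a i. 1 \<le> a \<and> a \<le> r \<and> i < a} \<union> {vx a True j | a j. 1 \<le> a \<and> a \<le> r \<and> j < r + 1 - a} \<subseteq> verts (EE r)"
  proof
    fix x assume "x \<in> {vx a False i | a i. 1 \<le> a \<and> a \<le> r \<and> i < a} \<union> {vx a True j | a j. 1 \<le> a \<and> a \<le> r \<and> j < r + 1 - a}"
    then obtain a i j where c: "1 \<le> a" "a \<le> r" "i < a" "j < r + 1 - a" and "x \<in> ed (a,i,j)"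
    proof (elim UnE CollectE exE conjE)
      fix a i assume h: "x = vx a False i" "1 \<le> a" "a \<le> r" "i < a"
        and th: "\<And>a i j. 1 \<le> a \<Longrightarrow> a \<le> r \<Longrightarrow> i < a \<Longrightarrow> j < r + 1 - a \<Longrightarrow> x \<in> ed (a, i, j) \<Longrightarrow> thesis"
      show thesis by (rule th[of a i 0]) (use h in auto)
    next
      fix a j assume h: "x = vx a True j" "1 \<le> a" "a \<le> r" "j < r + 1 - a"
        and th: "\<And>a i j. 1 \<le> a \<Longrightarrow> a \<le> r \<Longrightarrow> i < a \<Longrightarrow> j < r + 1 - a \<Longrightarrow> x \<in> ed (a, i, j) \<Longrightarrow> thesis"
      show thesis by (rule th[of a 0 j]) (use h in auto)
    qed
    moreover have "ed (a,i,j) \<in> EE r" using c by (rule ed_in)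
    ultimately show "x \<in> verts (EE r)" unfolding verts_def by blast
  qed
qed

lemma degset_EE: "degree_set (EE r) (verts (EE r)) = {1..r}"
proof
  show "degree_set (EE r) (verts (EE r)) \<subseteq> {1..r}"
    unfolding degree_set_def verts_EE by (auto simp: degL degR)
next
  show "{1..r} \<subseteq> degree_set (EE r) (verts (EE r))"
  proof
    fix d assume d: "d \<in> {1..r}"
    hence "vx d True 0 \<in> verts (EE r)" unfolding verts_EE by auto
    moreover have "deg (EE r) (vx d True 0) = d" using d by (intro degR) auto
    ultimately show "d \<in> degree_set (EE r) (verts (EE r))" unfolding degree_set_def by force
  qed
qed

lemma hexp_EE:
  assumes "e \<in> EE r" shows "hexp (EE r) e = r"
proof -
  obtain a i j where t: "(a,i,j) \<in> idx r" "e = ed (a,i,j)" using assms unfolding EE_def by auto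
  hence c: "1 \<le> a" "a \<le> r" "i < a" "j < r + 1 - a" unfolding idx_def by auto
  have "hexp (EE r) e = deg (EE r) (vx a False i) + deg (EE r) (vx a True j) - 1"
    unfolding hexp_def t ed_def by simp
  also have "\<dots> = r" using c by (simp add: degL degR)
  finally show ?thesis .
qed

lemma part2:
  assumes "r \<ge> 1"
  shows "\<exists>E :: nat set set. graph E \<and>
            card (degree_set E (verts E)) = r \<and> num_nonzero_coeffs (harmonic_poly E) = 1"
proof (intro exI conjI)
  show "graph (EE r)" by (rule graph_EE)
  show "card (degree_set (EE r) (verts (EE r))) = r" by (simp add: degset_EE)
  have ne: "ed (1,0,0) \<in> EE r" using assms unfolding EE_def idx_def by auto
  have "hexp (EE r) ` EE r = {r}"
  proof
    show "hexp (EE r) ` EE r \<subseteq> {r}" using hexp_EE by blast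
    show "{r} \<subseteq> hexp (EE r) ` EE r" using rev_image_eqI[where f="hexp (EE r)", OF ne hexp_EE[OF ne, symmetric]] by blast
  qed
  moreover have "finite (EE r)" using graph_EE graph_def by blast
  ultimately show "num_nonzero_coeffs (harmonic_poly (EE r)) = 1" by (simp add: K_eq)
qed

theorem theorem17:
  shows "(\<forall>(E :: 'a set set). graph E \<longrightarrow>
            (\<exists>v \<in> verts E. card (degree_set E (component E v)) > 2)
            \<longrightarrow> num_nonzero_coeffs (harmonic_poly E) \<ge> 2)
       \<and> (\<forall>r::nat. r \<ge> 1 \<longrightarrow> (\<exists>E :: nat set set. graph E \<and>
            card (degree_set E (verts E)) = r \<and> num_nonzero_coeffs (harmonic_poly E) = 1))"
  apply (rule conjI)
   apply (intro allI impI)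
   apply (erule bexE)
   apply (erule (2) part1)
  apply (intro allI impI)
  apply (erule part2)
  done

end
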